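(* Let $f:\mathbb B\to\mathbb B$ be slice regular with $f(\mathbb B_I)\subseteq\mathbb B_I$ for some $I\in\mathbb S$, and suppose the sequence of iterates $\{f^{\odot n}\}$ has a subsequence which converges, uniformly on compact subsets of $\mathbb B$, to a nonconstant function. Then $f$ is a regular Möbius transformation of $\mathbb B$, i.e. $f(q)=(1-q\bar a)^{-\ast}\ast(a-q)u$ for some $a\in\mathbb B$, $u\in\partial\mathbb B$.
   Context: $\mathbb H$ quaternions, $\mathbb S=\{q:q^2=-1\}$, $\mathbb C_I=\mathbb R+I\mathbb R$, $\mathbb B$ open unit ball, $\mathbb B_I=\mathbb B\cap\mathbb C_I$. Slice regular functions on $\mathbb B$ are convergent power series $\sum_nq^na_n$ (equivalently, functions $C^1$ on each slice $\mathbb B_I$ and annihilated there by $\frac12(\partial_x+I\partial_y)$). $\ast$-product $\big(\sum q^na_n\big)\ast\big(\sum q^nb_n\big)=\sum_nq^n\sum_ka_kb_{n-k}$, $\ast$-inverse $g^{-\ast}$, $\varphi^{\ast0}=1$, $\varphi^{\ast n}=\varphi\ast\varphi^{\ast(n-1)}$. Regular composition $g^{\odot}\varphi=\sum_n\varphi^{\ast n}a_n$ for $g=\sum q^na_n$; iterates $f^{\odot1}=f$, $f^{\odot(n+1)}=f^{\odot}(f^{\odot n})$. *)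

theory Defs
  imports "HOL-Analysis.Analysis"
begin

section \<open>Quaternions, modelled as real^4 (components 0,1,2,3 = 1,i,j,k)\<close>

type_synonym quat = "real ^ 4"

definition Quat :: "real \<Rightarrow> real \<Rightarrow> real \<Rightarrow> real \<Rightarrow> quat" where
  "Quat a b c d = (\<chi> i. if i = 0 then a else if i = 1 then b else if i = 2 then c else d)"

definition qmult :: "quat \<Rightarrow> quat \<Rightarrow> quat" (infixl "\<otimes>" 70) where
  "p \<otimes> q = Quat
     (p$0 * q$0 - p$1 * q$1 - p$2 * q$2 - p$3 * q$3)
     (p$0 * q$1 + p$1 * q$0 + p$2 * q$3 - p$3 * q$2)
     (p$0 * q$2 - p$1 * q$3 + p$2 * q$0 + p$3 * q$1)
     (p$0 * q$3 + p$1 * q$2 - p$2 * q$1 + p$3 * q$0)"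

definition qone :: quat where "qone = Quat 1 0 0 0"

definition qcnj :: "quat \<Rightarrow> quat" where
  "qcnj q = Quat (q$0) (- q$1) (- q$2) (- q$3)"

primrec qpow :: "quat \<Rightarrow> nat \<Rightarrow> quat" where
  "qpow q 0 = qone"
| "qpow q (Suc n) = q \<otimes> qpow q n"

definition Sph :: "quat set" where "Sph = {q. q \<otimes> q = - qone}"

definition slice :: "quat \<Rightarrow> quat set" where
  "slice I = {x *\<^sub>R qone + y *\<^sub>R I | x y. True}"

definition BB :: "quat set" where "BB = ball 0 1"

definition BB_slice :: "quat \<Rightarrow> quat set" where "BB_slice I = BB \<inter> slice I"

definition has_ps :: "(nat \<Rightarrow> quat) \<Rightarrow> (quat \<Rightarrow> quat) \<Rightarrow> bool" where
  "has_ps a f \<longleftrightarrow> (\<forall>q\<in>BB. (\<lambda>n. qpow q n \<otimes> a n) sums f q)"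

definition slice_regular :: "(quat \<Rightarrow> quat) \<Rightarrow> bool" where
  "slice_regular f \<longleftrightarrow> (\<exists>a. has_ps a f)"

definition coeffs :: "(quat \<Rightarrow> quat) \<Rightarrow> nat \<Rightarrow> quat" where
  "coeffs f = (SOME a. has_ps a f)"

definition ps :: "(nat \<Rightarrow> quat) \<Rightarrow> quat \<Rightarrow> quat" where
  "ps a q = (\<Sum>n. qpow q n \<otimes> a n)"

definition sprod :: "(quat \<Rightarrow> quat) \<Rightarrow> (quat \<Rightarrow> quat) \<Rightarrow> quat \<Rightarrow> quat" (infixl "\<star>" 70) where
  "f \<star> g = ps (\<lambda>n. \<Sum>k\<le>n. coeffs f k \<otimes> coeffs g (n - k))"

definition sinv :: "(quat \<Rightarrow> quat) \<Rightarrow> quat \<Rightarrow> quat" where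
  "sinv f = (SOME h. slice_regular h \<and> (\<forall>q\<in>BB. (f \<star> h) q = qone))"

primrec spow :: "(quat \<Rightarrow> quat) \<Rightarrow> nat \<Rightarrow> quat \<Rightarrow> quat" where
  "spow \<phi> 0 = (\<lambda>q. qone)"
| "spow \<phi> (Suc n) = \<phi> \<star> spow \<phi> n"

definition rcomp :: "(quat \<Rightarrow> quat) \<Rightarrow> (quat \<Rightarrow> quat) \<Rightarrow> quat \<Rightarrow> quat" where
  "rcomp g \<phi> = (\<lambda>q. \<Sum>n. spow \<phi> n q \<otimes> coeffs g n)"

text \<open>Regular iterates: riter f n = f^{\<odot>n} for n \<ge> 1 (riter f 0 = id is only a filler).\<close>
primrec riter :: "(quat \<Rightarrow> quat) \<Rightarrow> nat \<Rightarrow> quat \<Rightarrow> quat" where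
  "riter f 0 = (\<lambda>q. q)"
| "riter f (Suc n) = (if n = 0 then f else rcomp f (riter f n))"

end

theory Submission
  imports Defs "HOL-Complex_Analysis.Complex_Analysis"
begin


lemma exhaust_4': fixes i :: 4 shows "i = 0 \<or> i = 1 \<or> i = 2 \<or> i = 3"
  using exhaust_4[of i] by auto

lemma Quat_nth [simp]: "Quat a b c d $ 0 = a" "Quat a b c d $ 1 = b" "Quat a b c d $ 2 = c" "Quat a b c d $ 3 = d"
  by (simp_all add: Quat_def)

lemma quat_eq_iff: "(p::quat) = q \<longleftrightarrow> p$0 = q$0 \<and> p$1 = q$1 \<and> p$2 = q$2 \<and> p$3 = q$3"
proof
  assume h: "p$0 = q$0 \<and> p$1 = q$1 \<and> p$2 = q$2 \<and> p$3 = q$3"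
  have "p$i = q$i" for i
    using exhaust_4'[of i] h by (elim disjE) simp_all
  then show "p = q" by (simp add: vec_eq_iff)
qed simp

lemma sum_UNIV_4': "sum f (UNIV::4 set) = f 0 + f 1 + f 2 + f 3"
proof -
  have h4: "(4::4) = 0" by simp
  show ?thesis unfolding sum_4 h4 by (simp only: ac_simps)
qed

lemma norm_quat: "norm (q::quat) = sqrt (q$0^2 + q$1^2 + q$2^2 + q$3^2)"
  unfolding norm_vec_def L2_set_def sum_UNIV_4' by simp

lemma inner_quat: "inner (p::quat) q = p$0*q$0 + p$1*q$1 + p$2*q$2 + p$3*q$3"
  by (simp add: inner_vec_def sum_UNIV_4')


lemma qmult_nth [simp]:
  "(p \<otimes> q)$0 = p$0 * q$0 - p$1 * q$1 - p$2 * q$2 - p$3 * q$3"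
  "(p \<otimes> q)$1 = p$0 * q$1 + p$1 * q$0 + p$2 * q$3 - p$3 * q$2"
  "(p \<otimes> q)$2 = p$0 * q$2 - p$1 * q$3 + p$2 * q$0 + p$3 * q$1"
  "(p \<otimes> q)$3 = p$0 * q$3 + p$1 * q$2 - p$2 * q$1 + p$3 * q$0"
  by (simp_all add: qmult_def)

lemma qone_nth [simp]: "qone$0 = 1" "qone$1 = 0" "qone$2 = 0" "qone$3 = 0"
  by (simp_all add: qone_def)

lemma qcnj_nth [simp]: "qcnj q$0 = q$0" "qcnj q$1 = - q$1" "qcnj q$2 = - q$2" "qcnj q$3 = - q$3"
  by (simp_all add: qcnj_def)

lemma qmult_add_left: "(p + p') \<otimes> q = p \<otimes> q + p' \<otimes> q"
  by (simp add: quat_eq_iff algebra_simps)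
lemma qmult_add_right: "q \<otimes> (p + p') = q \<otimes> p + q \<otimes> p'"
  by (simp add: quat_eq_iff algebra_simps)
lemma qmult_diff_left: "(p - p') \<otimes> q = p \<otimes> q - p' \<otimes> q"
  by (simp add: quat_eq_iff algebra_simps)
lemma qmult_diff_right: "q \<otimes> (p - p') = q \<otimes> p - q \<otimes> p'"
  by (simp add: quat_eq_iff algebra_simps)
lemma qmult_minus_left: "(- p) \<otimes> q = - (p \<otimes> q)"
  by (simp add: quat_eq_iff algebra_simps)
lemma qmult_minus_right: "q \<otimes> (- p) = - (q \<otimes> p)"
  by (simp add: quat_eq_iff algebra_simps)
lemma qmult_zero_left [simp]: "0 \<otimes> q = 0"
  by (simp add: quat_eq_iff)
lemma qmult_zero_right [simp]: "q \<otimes> 0 = 0"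
  by (simp add: quat_eq_iff)
lemma qmult_scaleR_left: "(r *\<^sub>R p) \<otimes> q = r *\<^sub>R (p \<otimes> q)"
  by (simp add: quat_eq_iff algebra_simps)
lemma qmult_scaleR_right: "q \<otimes> (r *\<^sub>R p) = r *\<^sub>R (q \<otimes> p)"
  by (simp add: quat_eq_iff algebra_simps)
lemma qone_left [simp]: "qone \<otimes> q = q"
  by (simp add: quat_eq_iff)
lemma qone_right [simp]: "q \<otimes> qone = q"
  by (simp add: quat_eq_iff)
lemma qmult_assoc: "(p \<otimes> q) \<otimes> r = p \<otimes> (q \<otimes> r)"
  by (simp add: quat_eq_iff algebra_simps)

lemma norm_quat_sq: "norm (q::quat) ^ 2 = q$0^2 + q$1^2 + q$2^2 + q$3^2"
  unfolding norm_quat by (simp add: abs_of_nonneg)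

lemma qmult_norm: "norm (p \<otimes> q) = norm p * norm q"
proof -
  have "norm (p \<otimes> q) ^ 2 = (norm p * norm q)^2"
    unfolding power_mult_distrib norm_quat_sq by (simp add: algebra_simps power2_eq_square)
  then show ?thesis by (simp add: power2_eq_iff_nonneg)
qed

lemma bl_qmult_left: "bounded_linear (\<lambda>x. x \<otimes> c)"
  by (rule bounded_linear_intro[of _ "norm c"]) (auto simp: qmult_add_left qmult_scaleR_left qmult_norm)
lemma bl_qmult_right: "bounded_linear (\<lambda>x. c \<otimes> x)"
  by (rule bounded_linear_intro[of _ "norm c"]) (auto simp: qmult_add_right qmult_scaleR_right qmult_norm ac_simps)


definition qI :: "quat \<Rightarrow> complex \<Rightarrow> quat" where
  "qI J z = Re z *\<^sub>R qone + Im z *\<^sub>R J"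

definition qK :: "quat \<Rightarrow> quat \<Rightarrow> complex" where
  "qK J q = Complex (q$0) (inner q J)"

lemma Sph_iff: "J \<in> Sph \<longleftrightarrow> J$0 = 0 \<and> J$1^2 + J$2^2 + J$3^2 = 1"
proof
  assume "J \<in> Sph"
  then have e: "J \<otimes> J = - qone" by (simp add: Sph_def)
  then have e0: "J$0*J$0 - J$1*J$1 - J$2*J$2 - J$3*J$3 = -1"
    and e1: "J$0*J$1 = 0" and e2: "J$0*J$2 = 0" and e3: "J$0*J$3 = 0"
    by (auto simp: quat_eq_iff algebra_simps)
  have "J$0 = 0"
  proof (rule ccontr)
    assume "J$0 \<noteq> 0"
    with e1 e2 e3 have "J$1 = 0" "J$2 = 0" "J$3 = 0" by auto
    with e0 have "J$0*J$0 = -1" by simp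
    moreover have "J$0*J$0 \<ge> 0" by simp
    ultimately show False by linarith
  qed
  with e0 show "J$0 = 0 \<and> J$1^2 + J$2^2 + J$3^2 = 1" by (simp add: power2_eq_square)
next
  assume h: "J$0 = 0 \<and> J$1^2 + J$2^2 + J$3^2 = 1"
  then have "J$1*J$1 + J$2*J$2 + J$3*J$3 = 1" by (simp add: power2_eq_square)
  with h show "J \<in> Sph" by (simp add: Sph_def quat_eq_iff algebra_simps)
qed

lemma Sph_sq: "J \<in> Sph \<Longrightarrow> J \<otimes> J = - qone" by (simp add: Sph_def)

lemma Sph_norm: "J \<in> Sph \<Longrightarrow> norm J = 1"
  by (simp add: Sph_iff norm_quat)

lemma qI_nth [simp]: "qI J z $ i = Re z * qone$i + Im z * J$i"
  by (simp add: qI_def)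

lemma qI_add: "qI J (z + w) = qI J z + qI J w"
  by (simp add: qI_def algebra_simps)
lemma qI_diff: "qI J (z - w) = qI J z - qI J w"
  by (simp add: qI_def algebra_simps)
lemma qI_minus: "qI J (- z) = - qI J z"
  by (simp add: qI_def algebra_simps)
lemma qI_zero [simp]: "qI J 0 = 0"
  by (simp add: qI_def)
lemma qI_one [simp]: "qI J 1 = qone"
  by (simp add: qI_def)
lemma qI_scaleR: "qI J (r *\<^sub>R z) = r *\<^sub>R qI J z"
  by (simp add: qI_def algebra_simps)
lemma qI_of_real: "qI J (of_real r) = r *\<^sub>R qone"
  by (simp add: qI_def)

lemma bl_qI: "bounded_linear (qI J)"
proof (rule bounded_linear_intro[of _ "1 + norm J"])
  fix z
  have "norm (qI J z) \<le> norm (Re z *\<^sub>R qone) + norm (Im z *\<^sub>R J)"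
    unfolding qI_def by (rule norm_triangle_ineq)
  also have "\<dots> = \<bar>Re z\<bar> * norm qone + \<bar>Im z\<bar> * norm J" by simp
  also have "norm qone = 1" by (simp add: norm_quat)
  also have "\<bar>Re z\<bar> * 1 + \<bar>Im z\<bar> * norm J \<le> norm z * (1 + norm J)"
  proof -
    have "\<bar>Im z\<bar> * norm J \<le> norm z * norm J"
      by (rule mult_right_mono[OF abs_Im_le_cmod norm_ge_zero])
    then show ?thesis using abs_Re_le_cmod[of z] by (simp add: algebra_simps)
  qed
  finally show "norm (qI J z) \<le> norm z * (1 + norm J)" .
qed (auto simp: qI_add qI_scaleR)

lemma bl_qK: "bounded_linear (qK J)"
proof -
  have "bounded_linear (\<lambda>q. Complex (q$0) 0 + Complex 0 (inner q J))"
  proof (intro bounded_linear_add)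
    have "(\<lambda>q::quat. Complex (q$0) 0) = (\<lambda>q. of_real (q$0))" by (auto simp: complex_eq_iff)
    then show "bounded_linear (\<lambda>q::quat. Complex (q$0) 0)"
      using bounded_linear_compose[OF bounded_linear_of_real bounded_linear_vec_nth[of 0]] by (simp add: o_def)
    have "(\<lambda>q::quat. Complex 0 (inner q J)) = (\<lambda>q. \<i> * of_real (inner q J))" by (auto simp: complex_eq_iff)
    then show "bounded_linear (\<lambda>q::quat. Complex 0 (inner q J))"
      using bounded_linear_compose[OF bounded_linear_mult_right[of \<i>]
             bounded_linear_compose[OF bounded_linear_of_real bounded_linear_inner_left[of J]]]
      by (simp add: o_def)
  qed
  moreover have "(\<lambda>q. Complex (q$0) 0 + Complex 0 (inner q J)) = qK J"
    by (auto simp: qK_def complex_eq_iff)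
  ultimately show ?thesis by simp
qed

context
  fixes J :: quat
  assumes J: "J \<in> Sph"
begin

lemma J0: "J$0 = 0" and Jsq: "J$1^2 + J$2^2 + J$3^2 = 1"
  using J by (auto simp: Sph_iff)

lemma qI_mult: "qI J (z * w) = qI J z \<otimes> qI J w"
proof -
  have "qI J z \<otimes> qI J w = (Re z * Re w) *\<^sub>R qone + (Re z * Im w) *\<^sub>R J + (Im z * Re w) *\<^sub>R J + (Im z * Im w) *\<^sub>R (J \<otimes> J)"
    unfolding qI_def by (simp add: qmult_add_left qmult_add_right qmult_scaleR_left qmult_scaleR_right algebra_simps)
  also have "\<dots> = qI J (z * w)"
    by (simp add: Sph_sq[OF J] qI_def algebra_simps)
  finally show ?thesis by simp
qed

lemma qI_norm [simp]: "norm (qI J z) = norm z"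
proof -
  have "norm (qI J z)^2 = Re z^2 + Im z^2 * (J$1^2 + J$2^2 + J$3^2)"
    by (simp add: norm_quat_sq J0 power_mult_distrib algebra_simps)
  also have "\<dots> = norm z ^ 2" by (simp add: Jsq cmod_power2)
  finally show ?thesis by (simp add: power2_eq_iff_nonneg)
qed

lemma qK_qI [simp]: "qK J (qI J z) = z"
proof -
  have "inner (qI J z) J = Im z * (J$1^2 + J$2^2 + J$3^2)"
    by (simp add: inner_quat J0 power2_eq_square algebra_simps)
  then show ?thesis by (simp add: qK_def J0 Jsq complex_eq_iff)
qed

lemma qI_inj: "qI J z = qI J w \<longleftrightarrow> z = w"
  by (metis qK_qI)

lemma qcnj_qI: "qcnj (qI J z) = qI J (cnj z)"
  by (simp add: quat_eq_iff J0)

lemma qpow_qI: "qpow (qI J z) n = qI J (z ^ n)"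
  by (induction n) (simp_all add: qI_mult)

lemma slice_eq: "slice J = range (qI J)"
  unfolding slice_def qI_def
proof safe
  fix x y :: real
  show "x *\<^sub>R qone + y *\<^sub>R J \<in> range (\<lambda>z. Re z *\<^sub>R qone + Im z *\<^sub>R J)"
    by (rule range_eqI[of _ _ "Complex x y"]) simp
qed auto

lemma qI_qK: "q \<in> slice J \<Longrightarrow> qI J (qK J q) = q"
  unfolding slice_eq by auto

lemma qI_BB: "qI J z \<in> BB \<longleftrightarrow> norm z < 1"
  by (simp add: BB_def)

end

lemma quat_decomp:
  assumes I: "I \<in> Sph"
  shows "\<exists>J z. J \<in> Sph \<and> q = qI J z"
proof (cases "q$1^2 + q$2^2 + q$3^2 = 0")
  case True
  then have "q$1 = 0" "q$2 = 0" "q$3 = 0" by (auto simp: add_nonneg_eq_0_iff)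
  then have "q = qI I (of_real (q$0))" by (simp add: quat_eq_iff qI_def)
  then show ?thesis using I by blast
next
  case False
  define s where "s = sqrt (q$1^2 + q$2^2 + q$3^2)"
  have nn: "0 \<le> q$1^2 + q$2^2 + q$3^2" by simp
  then have "0 < q$1^2 + q$2^2 + q$3^2" using False by linarith
  then have s0: "s > 0" by (simp add: s_def)
  have ss: "s^2 = q$1^2 + q$2^2 + q$3^2" by (simp add: s_def add_nonneg_nonneg)
  define J where "J = Quat 0 (q$1/s) (q$2/s) (q$3/s)"
  have "J \<in> Sph"
    unfolding Sph_iff J_def using s0 ss False by (simp add: power_divide add_divide_distrib[symmetric])
  moreover have "q = qI J (Complex (q$0) s)"
    using s0 by (simp add: quat_eq_iff J_def)
  ultimately show ?thesis by blast
qed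

definition qA :: "quat \<Rightarrow> quat \<Rightarrow> quat" where "qA J I = (1/2) *\<^sub>R (qone - J \<otimes> I)"
definition qB :: "quat \<Rightarrow> quat \<Rightarrow> quat" where "qB J I = (1/2) *\<^sub>R (qone + J \<otimes> I)"

lemma qA_qB_sum: "qA J I + qB J I = qone"
proof -
  have "qA J I + qB J I = (1/2) *\<^sub>R ((qone - J \<otimes> I) + (qone + J \<otimes> I))"
    by (simp only: qA_def qB_def scaleR_add_right)
  also have "(qone - J \<otimes> I) + (qone + J \<otimes> I) = 2 *\<^sub>R qone"
    by (simp add: scaleR_2)
  finally show ?thesis by simp
qed

lemma qA_qB_diff: "qA J I - qB J I = - (J \<otimes> I)"
proof -
  have "qA J I - qB J I = (1/2) *\<^sub>R ((qone - J \<otimes> I) - (qone + J \<otimes> I))"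
    by (simp only: qA_def qB_def scaleR_diff_right)
  also have "(qone - J \<otimes> I) - (qone + J \<otimes> I) = 2 *\<^sub>R (- (J \<otimes> I))"
    by (simp add: scaleR_2)
  finally show ?thesis by simp
qed

lemma repr:
  assumes I: "I \<in> Sph"
  shows "qI J z = qA J I \<otimes> qI I z + qB J I \<otimes> qI I (cnj z)"
proof -
  have "qA J I \<otimes> qI I z + qB J I \<otimes> qI I (cnj z)
     = (Re z *\<^sub>R qA J I + Im z *\<^sub>R (qA J I \<otimes> I)) + (Re z *\<^sub>R qB J I - Im z *\<^sub>R (qB J I \<otimes> I))"
    by (simp add: qI_def qmult_add_right qmult_diff_right qmult_scaleR_right)
  also have "\<dots> = Re z *\<^sub>R (qA J I + qB J I) + Im z *\<^sub>R (qA J I \<otimes> I - qB J I \<otimes> I)"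
    by (simp only: scaleR_add_right scaleR_diff_right) (simp only: ac_simps diff_conv_add_uminus)
  also have "qA J I \<otimes> I - qB J I \<otimes> I = (qA J I - qB J I) \<otimes> I"
    by (simp add: qmult_diff_left)
  also have "(qA J I - qB J I) \<otimes> I = J"
    by (simp add: qA_qB_diff qmult_minus_left qmult_assoc Sph_sq[OF I] qmult_minus_right)
  finally show ?thesis by (simp add: qA_qB_sum qI_def)
qed

lemma repr_mult:
  assumes I: "I \<in> Sph" and J: "J \<in> Sph"
  shows "qpow (qI J z) n \<otimes> qI I c = qA J I \<otimes> qI I (z^n * c) + qB J I \<otimes> qI I (cnj z ^ n * c)"
proof -
  have "qpow (qI J z) n \<otimes> qI I c = (qA J I \<otimes> qI I (z^n) + qB J I \<otimes> qI I (cnj (z^n))) \<otimes> qI I c"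
    unfolding qpow_qI[OF J] using repr[OF I, of J "z^n"] by simp
  also have "\<dots> = qA J I \<otimes> qI I (z^n * c) + qB J I \<otimes> qI I (cnj z ^ n * c)"
    by (simp only: qmult_add_left qmult_assoc qI_mult[OF I] complex_cnj_power)
  finally show ?thesis .
qed


definition tc :: "(complex \<Rightarrow> complex) \<Rightarrow> nat \<Rightarrow> complex" where
  "tc G n = (deriv ^^ n) G 0 / fact n"

lemma CU:
  assumes "\<And>w. norm w < 1 \<Longrightarrow> (\<lambda>n. c n * w^n) sums G w"
  shows "c n = tc G n"
proof -
  have ev: "eventually (\<lambda>u. (\<lambda>n. fps_nth (Abs_fps c) n * u ^ n) sums G u) (nhds 0)"
  proof (rule eventually_nhds_in_open[of "ball 0 1", THEN eventually_mono])
    show "(\<lambda>n. fps_nth (Abs_fps c) n * u ^ n) sums G u" if "u \<in> ball 0 1" for u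
      using assms[of u] that by simp
  qed auto
  have "G has_fps_expansion Abs_fps c" by (rule has_fps_expansionI[OF ev])
  from fps_nth_fps_expansion[OF this, of n] show ?thesis by (simp add: tc_def)
qed

lemma tc_sums:
  assumes "G holomorphic_on ball 0 1" "norm w < 1"
  shows "(\<lambda>n. tc G n * w^n) sums G w"
  using holomorphic_power_series[OF assms(1), of w] assms(2) by (simp add: tc_def)

lemma tc_cong:
  assumes "\<And>w. norm w < 1 \<Longrightarrow> G w = H w"
  shows "tc G = tc H"
proof
  fix n
  have "eventually (\<lambda>w. G w = H w) (nhds 0)"
    by (rule eventually_nhds_in_open[of "ball 0 1", THEN eventually_mono]) (auto simp: assms)
  then show "tc G n = tc H n" unfolding tc_def by (metis higher_deriv_cong_ev)
qed

lemma tc_0: "tc G 0 = G 0" by (simp add: tc_def)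

lemma tc_mult:
  assumes "G holomorphic_on ball 0 1" "H holomorphic_on ball 0 1"
  shows "tc (\<lambda>w. G w * H w) n = (\<Sum>k\<le>n. tc G k * tc H (n - k))"
proof -
  have "(deriv ^^ n) (\<lambda>w. G w * H w) 0 =
        (\<Sum>i = 0..n. of_nat (n choose i) * (deriv ^^ i) G 0 * (deriv ^^ (n-i)) H 0)"
    by (rule higher_deriv_mult[OF assms]) auto
  then have "tc (\<lambda>w. G w * H w) n = (\<Sum>i\<le>n. of_nat (n choose i) * (deriv ^^ i) G 0 * (deriv ^^ (n-i)) H 0 / fact n)"
    by (simp add: tc_def sum_divide_distrib atLeast0AtMost)
  also have "\<dots> = (\<Sum>k\<le>n. tc G k * tc H (n - k))"
  proof (rule sum.cong[OF refl])
    fix i assume "i \<in> {..n}"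
    then have "i \<le> n" by simp
    then have "(of_nat (n choose i) :: complex) = fact n / (fact i * fact (n - i))" by (rule binomial_fact)
    then show "of_nat (n choose i) * (deriv ^^ i) G 0 * (deriv ^^ (n-i)) H 0 / fact n = tc G i * tc H (n - i)"
      by (simp add: tc_def field_simps)
  qed
  finally show ?thesis .
qed

lemma real_ps_unique:
  fixes e :: "nat \<Rightarrow> real"
  assumes h: "\<And>x. \<bar>x\<bar> < 1 \<Longrightarrow> (\<lambda>n. e n * x^n) sums 0"
  shows "e n = 0"
proof -
  define E where "E w = (\<Sum>n. complex_of_real (e n) * w^n)" for w
  have sE: "(\<lambda>n. complex_of_real (e n) * w^n) sums E w" if "norm w < 1" for w
  proof -
    define x where "x = (norm w + 1) / 2"
    have x: "\<bar>x\<bar> < 1" "norm w < norm (complex_of_real x)" using that by (auto simp: x_def)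
    have "summable (\<lambda>n. complex_of_real (e n * x^n))"
      using sums_of_real[where 'a=complex, OF h[OF x(1)]] by (simp add: sums_iff)
    then have "summable (\<lambda>n. complex_of_real (e n) * complex_of_real x ^ n)" by simp
    from powser_inside[OF this x(2)] show ?thesis by (simp add: E_def summable_sums)
  qed
  have holE: "E holomorphic_on ball 0 1"
    by (rule power_series_holomorphic[where a = "\<lambda>n. complex_of_real (e n)"]) (use sE in auto)
  have E0: "E w = 0" if "w \<in> ball 0 1" for w
  proof (rule analytic_continuation[OF holE open_ball connected_ball, where U="of_real ` {-1/2<..<1/2}" and \<xi>=0])
    show "of_real ` {-1/2<..<1/2} \<subseteq> ball (0::complex) 1" by auto
    show "(0::complex) islimpt of_real ` {-1/2<..<1/2}"
    proof (rule islimptI)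
      fix T :: "complex set" assume "0 \<in> T" "open T"
      then obtain d where d: "d > 0" "ball 0 d \<subseteq> T" by (meson openE)
      define y where "y = min (d/2) (1/4)"
      have "complex_of_real y \<in> T" using d by (auto simp: y_def intro!: d(2)[THEN subsetD])
      moreover have "y \<in> {-1/2<..<1/2}" using d by (auto simp: y_def)
      then have "complex_of_real y \<in> of_real ` {-1/2<..<1/2}" by blast
      moreover have "complex_of_real y \<noteq> 0" using d by (simp add: y_def)
      ultimately show "\<exists>y\<in>of_real ` {-1/2<..<1/2}. y \<in> T \<and> y \<noteq> 0" by blast
    qed
    show "E z = 0" if zU: "z \<in> of_real ` {-1/2<..<1/2}" for z
    proof -
      obtain x where x0: "x \<in> {-1/2<..<1/2}" "z = of_real x" using zU by blast
      then have x: "z = of_real x" "\<bar>x\<bar> < 1/2" by auto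
      have "(\<lambda>n. complex_of_real (e n) * z^n) sums E z" using sE x by auto
      moreover have "(\<lambda>n. complex_of_real (e n) * z^n) sums 0"
        using sums_of_real[where 'a=complex, OF h[of x]] x by simp
      ultimately show ?thesis using sums_unique2 by blast
    qed
  qed (use that in auto)
  have "complex_of_real (e n) = tc E n" by (rule CU) (use sE in auto)
  also have "tc E = tc (\<lambda>_. 0)" by (rule tc_cong) (use E0 in auto)
  also have "tc (\<lambda>_. 0) n = 0" by (rule CU[symmetric]) simp
  finally show ?thesis by simp
qed

lemma quat_ps_unique0:
  fixes e :: "nat \<Rightarrow> quat"
  assumes h: "\<And>x. \<bar>x\<bar> < 1 \<Longrightarrow> (\<lambda>n. x^n *\<^sub>R e n) sums 0"
  shows "e n = 0"
proof -
  have "e n $ i = 0" for i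
  proof (rule real_ps_unique)
    fix x :: real assume "\<bar>x\<bar> < 1"
    from bounded_linear.sums[OF bounded_linear_vec_nth[of i] h[OF this]]
    show "(\<lambda>n. e n $ i * x ^ n) sums 0" by (simp add: mult.commute)
  qed
  then show ?thesis by (simp add: vec_eq_iff)
qed

lemma qpow_real: "qpow (x *\<^sub>R qone) n = x^n *\<^sub>R qone"
  by (induction n) (simp_all add: qmult_scaleR_left)

lemma norm_qone [simp]: "norm qone = 1" by (simp add: norm_quat)

lemma has_ps_unique:
  assumes "has_ps a f" "has_ps b f"
  shows "a = b"
proof -
  have "a n - b n = 0" for n
  proof (rule quat_ps_unique0)
    fix x :: real assume x: "\<bar>x\<bar> < 1"
    then have q: "x *\<^sub>R qone \<in> BB" by (simp add: BB_def)
    have "(\<lambda>n. x^n *\<^sub>R a n) sums f (x *\<^sub>R qone)" "(\<lambda>n. x^n *\<^sub>R b n) sums f (x *\<^sub>R qone)"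
      using assms q by (auto simp: has_ps_def qpow_real qmult_scaleR_left)
    from sums_diff[OF this] show "(\<lambda>n. x^n *\<^sub>R (a n - b n)) sums 0" by (simp add: scaleR_diff_right)
  qed
  then show ?thesis by auto
qed

lemma coeffs_eq: "has_ps a f \<Longrightarrow> coeffs f = a"
  unfolding coeffs_def by (rule some_equality) (auto intro: has_ps_unique)

lemma has_ps_cong: "has_ps a f \<Longrightarrow> (\<And>q. q \<in> BB \<Longrightarrow> f q = g q) \<Longrightarrow> has_ps a g"
  by (simp add: has_ps_def)

lemma has_ps_coeffs: "slice_regular f \<Longrightarrow> has_ps (coeffs f) f"
  unfolding slice_regular_def coeffs_def by (metis someI_ex)

lemma qI_sum: "qI J (sum g S) = (\<Sum>x\<in>S. qI J (g x))"
  by (induction S rule: infinite_finite_induct) (auto simp: qI_add)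


definition L :: "quat \<Rightarrow> (complex \<Rightarrow> complex) \<Rightarrow> quat \<Rightarrow> quat" where
  "L I G q = ps (\<lambda>n. qI I (tc G n)) q"

lemma L_cong: "(\<And>w. norm w < 1 \<Longrightarrow> G w = H w) \<Longrightarrow> L I G = L I H"
  unfolding L_def using tc_cong by metis

lemma qA_II: "I \<in> Sph \<Longrightarrow> qA I I = qone"
  by (simp add: qA_def Sph_sq scaleR_2[symmetric])
lemma qB_II: "I \<in> Sph \<Longrightarrow> qB I I = 0"
  by (simp add: qB_def Sph_sq)

context
  fixes I :: quat
  assumes I: "I \<in> Sph"
begin

lemma L_sums:
  assumes G: "G holomorphic_on ball 0 1" and J: "J \<in> Sph" and z: "norm z < 1"
  shows "(\<lambda>n. qpow (qI J z) n \<otimes> qI I (tc G n)) sums (qA J I \<otimes> qI I (G z) + qB J I \<otimes> qI I (G (cnj z)))"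
proof -
  have s1: "(\<lambda>n. z^n * tc G n) sums G z" using tc_sums[OF G z] by (simp add: mult.commute)
  have s2: "(\<lambda>n. cnj z^n * tc G n) sums G (cnj z)" using tc_sums[OF G, of "cnj z"] z by (simp add: mult.commute)
  have "(\<lambda>n. qA J I \<otimes> qI I (z^n * tc G n) + qB J I \<otimes> qI I (cnj z ^ n * tc G n)) sums
        (qA J I \<otimes> qI I (G z) + qB J I \<otimes> qI I (G (cnj z)))"
    by (intro sums_add bounded_linear.sums[OF bl_qmult_right] bounded_linear.sums[OF bl_qI] s1 s2)
  then show ?thesis by (simp add: repr_mult[OF I J])
qed

lemma L_repr:
  assumes G: "G holomorphic_on ball 0 1" and J: "J \<in> Sph" and z: "norm z < 1"
  shows "L I G (qI J z) = qA J I \<otimes> qI I (G z) + qB J I \<otimes> qI I (G (cnj z))"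
  unfolding L_def ps_def using sums_unique[OF L_sums[OF assms]] by simp

lemma BB_decomp:
  assumes "q \<in> BB"
  obtains J z where "J \<in> Sph" "q = qI J z" "norm z < 1"
proof -
  obtain J z where "J \<in> Sph" "q = qI J z" using quat_decomp[OF I] by blast
  moreover have "norm z < 1" using assms calculation by (simp add: BB_def)
  ultimately show ?thesis using that by blast
qed

lemma L_has_ps:
  assumes G: "G holomorphic_on ball 0 1"
  shows "has_ps (\<lambda>n. qI I (tc G n)) (L I G)"
  unfolding has_ps_def
proof
  fix q assume "q \<in> BB"
  then obtain J z where Jz: "J \<in> Sph" "q = qI J z" "norm z < 1" by (rule BB_decomp)
  show "(\<lambda>n. qpow q n \<otimes> qI I (tc G n)) sums L I G q"
    using L_sums[OF G Jz(1,3)] L_repr[OF G Jz(1,3)] Jz(2) by simp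
qed

lemma L_slice:
  assumes G: "G holomorphic_on ball 0 1" and w: "norm w < 1"
  shows "L I G (qI I w) = qI I (G w)"
  using L_repr[OF G I w] by (simp add: qA_II[OF I] qB_II[OF I])

lemma coeffs_L:
  assumes G: "G holomorphic_on ball 0 1" and eq: "\<And>q. q \<in> BB \<Longrightarrow> \<phi> q = L I G q"
  shows "coeffs \<phi> = (\<lambda>n. qI I (tc G n))"
  by (rule coeffs_eq, rule has_ps_cong[OF L_has_ps[OF G]]) (simp add: eq)

lemma slice_regular_L:
  assumes G: "G holomorphic_on ball 0 1" and eq: "\<And>q. q \<in> BB \<Longrightarrow> \<phi> q = L I G q"
  shows "slice_regular \<phi>"
  unfolding slice_regular_def using has_ps_cong[OF L_has_ps[OF G]] eq by metis

lemma L_affine: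
  assumes q: "q \<in> BB"
  shows "L I (\<lambda>w. \<alpha> + w * \<beta>) q = qI I \<alpha> + q \<otimes> qI I \<beta>"
proof -
  obtain J z where Jz: "J \<in> Sph" "q = qI J z" "norm z < 1" using q by (rule BB_decomp)
  have hol: "(\<lambda>w. \<alpha> + w * \<beta>) holomorphic_on ball 0 1" by (intro holomorphic_intros)
  have "L I (\<lambda>w. \<alpha> + w * \<beta>) q = qA J I \<otimes> qI I (\<alpha> + z * \<beta>) + qB J I \<otimes> qI I (\<alpha> + cnj z * \<beta>)"
    using L_repr[OF hol Jz(1,3)] Jz(2) by simp
  also have "\<dots> = (qA J I + qB J I) \<otimes> qI I \<alpha> + (qA J I \<otimes> qI I z + qB J I \<otimes> qI I (cnj z)) \<otimes> qI I \<beta>"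
    by (simp add: qI_add qI_mult[OF I] qmult_add_right qmult_add_left qmult_assoc)
  also have "\<dots> = qI I \<alpha> + q \<otimes> qI I \<beta>"
    using repr[OF I, of J z] Jz(2) by (simp add: qA_qB_sum)
  finally show ?thesis .
qed

lemma star_L:
  assumes G: "G holomorphic_on ball 0 1" and H: "H holomorphic_on ball 0 1"
    and cf: "coeffs \<phi> = (\<lambda>n. qI I (tc G n))" and cg: "coeffs \<psi> = (\<lambda>n. qI I (tc H n))"
  shows "\<phi> \<star> \<psi> = L I (\<lambda>w. G w * H w)"
  unfolding sprod_def L_def cf cg tc_mult[OF G H] qI_sum qI_mult[OF I] ..

lemma L_one: "q \<in> BB \<Longrightarrow> L I (\<lambda>w. 1) q = qone"
  using L_affine[of q 1 0] by simp

lemma spow_L: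
  assumes G: "G holomorphic_on ball 0 1" and eq: "\<And>q. q \<in> BB \<Longrightarrow> \<phi> q = L I G q"
  shows "q \<in> BB \<Longrightarrow> spow \<phi> n q = L I (\<lambda>w. G w ^ n) q"
proof (induction n arbitrary: q)
  case 0
  then show ?case using L_one by simp
next
  case (Suc n)
  have hn: "(\<lambda>w. G w ^ n) holomorphic_on ball 0 1" using G by (intro holomorphic_intros)
  have "spow \<phi> (Suc n) = \<phi> \<star> spow \<phi> n" by simp
  also have "\<dots> = L I (\<lambda>w. G w * G w ^ n)"
    by (rule star_L[OF G hn coeffs_L[OF G eq] coeffs_L[OF hn Suc.IH]])
  finally show ?case by simp
qed

lemma rcomp_L:
  assumes F: "F holomorphic_on ball 0 1" and G: "G holomorphic_on ball 0 1"
    and GB: "\<And>w. norm w < 1 \<Longrightarrow> norm (G w) < 1"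
    and ef: "\<And>q. q \<in> BB \<Longrightarrow> f q = L I F q"
    and eq: "\<And>q. q \<in> BB \<Longrightarrow> \<phi> q = L I G q"
    and q: "q \<in> BB"
  shows "rcomp f \<phi> q = L I (\<lambda>w. F (G w)) q"
proof -
  obtain J z where Jz: "J \<in> Sph" "q = qI J z" "norm z < 1" using q by (rule BB_decomp)
  have hn: "(\<lambda>w. G w ^ n) holomorphic_on ball 0 1" for n using G by (intro holomorphic_intros)
  have hFG: "(\<lambda>w. F (G w)) holomorphic_on ball 0 1"
  proof -
    have "G ` ball 0 1 \<subseteq> ball 0 1" using GB by auto
    from holomorphic_on_compose_gen[OF G F this] show ?thesis by (simp add: o_def)
  qed
  have cf: "coeffs f = (\<lambda>n. qI I (tc F n))" by (rule coeffs_L[OF F ef])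
  have tm: "spow \<phi> n q \<otimes> coeffs f n =
      qA J I \<otimes> qI I (G z ^ n * tc F n) + qB J I \<otimes> qI I (G (cnj z) ^ n * tc F n)" for n
  proof -
    have "spow \<phi> n q = L I (\<lambda>w. G w ^ n) q" by (rule spow_L[OF G eq q])
    also have "\<dots> = qA J I \<otimes> qI I (G z ^ n) + qB J I \<otimes> qI I (G (cnj z) ^ n)"
      using L_repr[OF hn Jz(1,3)] Jz(2) by simp
    finally show ?thesis
      by (simp add: cf qmult_add_left qmult_assoc qI_mult[OF I])
  qed
  have s1: "(\<lambda>n. G z ^ n * tc F n) sums F (G z)"
    using tc_sums[OF F GB[OF Jz(3)]] by (simp add: mult.commute)
  have s2: "(\<lambda>n. G (cnj z) ^ n * tc F n) sums F (G (cnj z))"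
    using tc_sums[OF F GB[of "cnj z"]] Jz(3) by (simp add: mult.commute)
  have "(\<lambda>n. spow \<phi> n q \<otimes> coeffs f n) sums (qA J I \<otimes> qI I (F (G z)) + qB J I \<otimes> qI I (F (G (cnj z))))"
    unfolding tm
    by (intro sums_add bounded_linear.sums[OF bl_qmult_right] bounded_linear.sums[OF bl_qI] s1 s2)
  also have "qA J I \<otimes> qI I (F (G z)) + qB J I \<otimes> qI I (F (G (cnj z))) = L I (\<lambda>w. F (G w)) q"
    using L_repr[OF hFG Jz(1,3)] Jz(2) by simp
  finally show ?thesis unfolding rcomp_def by (rule sums_unique[symmetric])
qed

end


lemma hol_ulimit:
  assumes hol: "\<And>n. f n holomorphic_on ball (0::complex) 1"
    and ul: "\<And>K. compact K \<Longrightarrow> K \<subseteq> ball 0 1 \<Longrightarrow> uniform_limit K f g sequentially"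
  shows "g holomorphic_on ball 0 1"
proof -
  have "g holomorphic_on ball z ((1 - norm z)/2)" if z: "z \<in> ball 0 1" for z
  proof -
    define r where "r = (1 - norm z)/2"
    have sub: "cball z r \<subseteq> ball 0 1"
    proof
      fix x assume "x \<in> cball z r"
      then have "norm (x - z) \<le> r" by (simp add: dist_norm norm_minus_commute)
      moreover have "norm x \<le> norm z + norm (x - z)" by (metis add.commute diff_add_cancel norm_triangle_ineq)
      ultimately show "x \<in> ball 0 1" using z by (simp add: r_def)
    qed
    obtain "continuous_on (cball z r) g" "g holomorphic_on ball z r"
    proof (rule holomorphic_uniform_limit)
      show "\<forall>\<^sub>F n in sequentially. continuous_on (cball z r) (f n) \<and> f n holomorphic_on ball z r"
      proof (intro always_eventually allI conjI)
        fix n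
        show "continuous_on (cball z r) (f n)"
          using holomorphic_on_imp_continuous_on[OF hol[of n]] sub by (rule continuous_on_subset)
        show "f n holomorphic_on ball z r"
          using hol[of n] sub ball_subset_cball by (meson holomorphic_on_subset order_trans)
      qed
      show "uniform_limit (cball z r) f g sequentially" using ul sub by auto
    qed auto
    then show ?thesis by (simp add: r_def)
  qed
  then have "g holomorphic_on (\<Union>z\<in>ball 0 1. ball z ((1 - norm z)/2))"
    by (intro holomorphic_on_UN_open) auto
  moreover have "ball (0::complex) 1 \<subseteq> (\<Union>z\<in>ball 0 1. ball z ((1 - norm z)/2))"
  proof (rule subsetI)
    fix w :: complex assume w: "w \<in> ball 0 1"
    then have "w \<in> ball w ((1 - norm w)/2)" by simp
    then show "w \<in> (\<Union>z\<in>ball 0 1. ball z ((1 - norm z)/2))" using w by blast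
  qed
  ultimately show ?thesis by (rule holomorphic_on_subset)
qed

lemma nonconst_in_ball:
  assumes hol: "h holomorphic_on ball (0::complex) 1"
    and nc: "\<exists>p\<in>ball 0 1. \<exists>q\<in>ball 0 1. h p \<noteq> h q"
    and le: "\<And>w. w \<in> ball 0 1 \<Longrightarrow> norm (h w) \<le> 1"
  shows "h ` ball 0 1 \<subseteq> ball 0 1" "open (h ` ball 0 1)"
proof -
  have "\<not> h constant_on ball 0 1" using nc unfolding constant_on_def by metis
  then show op: "open (h ` ball 0 1)"
    by (intro open_mapping_thm[OF hol]) auto
  have "h ` ball 0 1 \<subseteq> cball 0 1" using le by auto
  then have "h ` ball 0 1 \<subseteq> interior (cball 0 1)" using op interior_maximal by blast
  then show "h ` ball 0 1 \<subseteq> ball 0 1" by simp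
qed

lemma ulim_comp:
  fixes f :: "nat \<Rightarrow> complex \<Rightarrow> complex"
  assumes ul: "uniform_limit (cball y e) f h sequentially" and ch: "continuous_on (cball y e) h"
    and e: "e > 0" and x: "x \<longlonglongrightarrow> y"
  shows "(\<lambda>n. f n (x n)) \<longlonglongrightarrow> h y"
proof (rule tendstoI)
  fix \<epsilon> :: real assume \<epsilon>: "\<epsilon> > 0"
  have "y \<in> cball y e" using e by simp
  then obtain \<delta> where \<delta>: "\<delta> > 0" "\<And>z. z \<in> cball y e \<Longrightarrow> dist z y < \<delta> \<Longrightarrow> dist (h z) (h y) < \<epsilon>/2"
    using ch \<epsilon> unfolding continuous_on_iff by (metis half_gt_zero)
  have ev1: "\<forall>\<^sub>F n in sequentially. \<forall>z\<in>cball y e. dist (f n z) (h z) < \<epsilon>/2"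
    using uniform_limitD[OF ul, of "\<epsilon>/2"] \<epsilon> by simp
  have ev2: "\<forall>\<^sub>F n in sequentially. dist (x n) y < min \<delta> e"
    using tendstoD[OF x, of "min \<delta> e"] \<delta>(1) e by simp
  show "\<forall>\<^sub>F n in sequentially. dist (f n (x n)) (h y) < \<epsilon>"
    using ev1 ev2
  proof eventually_elim
    case (elim n)
    then have xc: "x n \<in> cball y e" by (simp add: dist_commute)
    have "dist (f n (x n)) (h y) \<le> dist (f n (x n)) (h (x n)) + dist (h (x n)) (h y)"
      by (rule dist_triangle)
    also have "\<dots> < \<epsilon>/2 + \<epsilon>/2" using elim xc \<delta>(2)[OF xc] by (intro add_strict_mono) auto
    finally show ?case by simp
  qed
qed

lemma iter_props:
  assumes holF: "F holomorphic_on ball 0 1" and FB: "\<And>w. norm w < 1 \<Longrightarrow> norm (F w) < (1::real)"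
  shows "(F ^^ n) holomorphic_on ball (0::complex) 1" "\<And>w. norm w < 1 \<Longrightarrow> norm ((F ^^ n) w) < 1"
proof -
  have "(F ^^ n) holomorphic_on ball 0 1 \<and> (\<forall>w. norm w < 1 \<longrightarrow> norm ((F ^^ n) w) < 1)"
  proof (induction n)
    case 0 then show ?case by (simp add: holomorphic_on_ident id_def)
  next
    case (Suc n)
    then have sub: "(F ^^ n) ` ball 0 1 \<subseteq> ball 0 1" by auto
    have "(F \<circ> F ^^ n) holomorphic_on ball 0 1" using holomorphic_on_compose_gen[OF _ holF sub] Suc by simp
    then show ?case using Suc by (simp add: FB o_def)
  qed
  then show "(F ^^ n) holomorphic_on ball (0::complex) 1" "\<And>w. norm w < 1 \<Longrightarrow> norm ((F ^^ n) w) < 1"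
    by auto
qed

theorem classical_iter:
  fixes F G0 :: "complex \<Rightarrow> complex" and \<sigma> :: "nat \<Rightarrow> nat"
  assumes holF: "F holomorphic_on ball 0 1" and FB: "\<And>w. norm w < 1 \<Longrightarrow> norm (F w) < 1"
    and \<sigma>: "strict_mono \<sigma>"
    and ul: "\<And>K. compact K \<Longrightarrow> K \<subseteq> ball 0 1 \<Longrightarrow> uniform_limit K (\<lambda>k. F ^^ (Suc (\<sigma> k))) G0 sequentially"
    and nc: "\<exists>p\<in>ball 0 1. \<exists>q\<in>ball 0 1. G0 p \<noteq> G0 q"
  shows "\<exists>a u. norm a < 1 \<and> norm u = 1 \<and> (\<forall>w. norm w < 1 \<longrightarrow> F w = (a - w) * u / (1 - w * cnj a))"
proof -
  note it = iter_props[OF holF FB]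
  define n where "n k = Suc (\<sigma> k)" for k
  have nmono: "strict_mono n" using \<sigma> by (simp add: strict_mono_def n_def)
  have pt: "(\<lambda>k. (F ^^ n k) w) \<longlonglongrightarrow> G0 w" if "w \<in> ball 0 1" for w
    using tendsto_uniform_limitI[OF ul[of "{w}"]] that by (simp add: n_def)
  have holG: "G0 holomorphic_on ball 0 1"
    by (rule hol_ulimit[where f="\<lambda>k. F ^^ (Suc (\<sigma> k))", OF it(1) ul])
  have G0le: "norm (G0 w) \<le> 1" if w: "w \<in> ball 0 1" for w
  proof (rule tendsto_upperbound[OF tendsto_norm[OF pt[OF w]]])
    show "\<forall>\<^sub>F k in sequentially. norm ((F ^^ n k) w) \<le> 1"
      using it(2) w by (intro always_eventually allI) (simp add: less_imp_le)
  qed simp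
  note G0B = nonconst_in_ball[OF holG nc G0le]
  define m where "m k = n (Suc k) - n k" for k
  have nm: "n (Suc k) = m k + n k" for k
    using strict_monoD[OF nmono, of k "Suc k"] by (simp add: m_def)
  have m1: "m k \<ge> 1" for k
    using strict_monoD[OF nmono, of k "Suc k"] by (simp add: m_def)
  define \<H> where "\<H> = {h. h holomorphic_on ball (0::complex) 1 \<and> (\<forall>w\<in>ball 0 1. norm (h w) \<le> 1)}"
  have itH: "F ^^ k \<in> \<H>" for k using it by (auto simp: \<H>_def less_imp_le)
  define \<F> where "\<F> k = F ^^ m k" for k
  obtain H1 r1 where H1hol: "H1 holomorphic_on ball 0 1" and r1: "strict_mono (r1 :: nat \<Rightarrow> nat)"
    and H1pt: "\<And>x. x \<in> ball 0 1 \<Longrightarrow> (\<lambda>k. \<F> (r1 k) x) \<longlonglongrightarrow> H1 x"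
    and H1ul: "\<And>K. compact K \<Longrightarrow> K \<subseteq> ball 0 1 \<Longrightarrow> uniform_limit K (\<F> \<circ> r1) H1 sequentially"
  proof (rule Montel[of "ball 0 1" \<H> \<F>])
    show "\<exists>B. \<forall>h\<in>\<H>. \<forall>z\<in>K. norm (h z) \<le> B" if "compact K" "K \<subseteq> ball 0 1" for K
      using that by (intro exI[of _ 1]) (auto simp: \<H>_def)
    show "range \<F> \<subseteq> \<H>" using itH by (auto simp: \<F>_def)
  qed (auto simp: \<H>_def)
  have H1G: "H1 (G0 w) = G0 w" if w: "w \<in> ball 0 1" for w
  proof -
    define y where "y = G0 w"
    have y: "norm y < 1" using G0B(1) w unfolding y_def by force
    define e where "e = (1 - norm y) / 2"
    have e: "e > 0" using y by (simp add: e_def)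
    have cb: "cball y e \<subseteq> ball 0 1"
    proof
      fix x assume "x \<in> cball y e"
      then have "norm (x - y) \<le> e" by (simp add: dist_norm norm_minus_commute)
      moreover have "norm x \<le> norm y + norm (x - y)" by (metis add.commute diff_add_cancel norm_triangle_ineq)
      ultimately show "x \<in> ball 0 1" using y by (simp add: e_def)
    qed
    have seqA: "(\<lambda>j. (F ^^ n (Suc (r1 j))) w) \<longlonglongrightarrow> G0 w"
    proof -
      have "strict_mono (\<lambda>j. Suc (r1 j))" using r1 by (simp add: strict_mono_def)
      from LIMSEQ_subseq_LIMSEQ[OF pt[OF w] this] show ?thesis by (simp add: o_def)
    qed
    have seqB: "(\<lambda>j. (F ^^ n (r1 j)) w) \<longlonglongrightarrow> y"
      using LIMSEQ_subseq_LIMSEQ[OF pt[OF w] r1] by (simp add: o_def y_def)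
    have "(\<lambda>j. (\<F> \<circ> r1) j ((F ^^ n (r1 j)) w)) \<longlonglongrightarrow> H1 y"
    proof (rule ulim_comp[OF H1ul[OF compact_cball cb] _ e seqB])
      show "continuous_on (cball y e) H1"
        using holomorphic_on_imp_continuous_on[OF H1hol] cb by (rule continuous_on_subset)
    qed
    moreover have "(\<F> \<circ> r1) j ((F ^^ n (r1 j)) w) = (F ^^ n (Suc (r1 j))) w" for j
      by (simp add: \<F>_def nm funpow_add)
    ultimately have "(\<lambda>j. (F ^^ n (Suc (r1 j))) w) \<longlonglongrightarrow> H1 y" by simp
    with seqA show ?thesis using LIMSEQ_unique y_def by blast
  qed
  have H1id: "H1 w = w" if w: "w \<in> ball 0 1" for w
  proof (rule analytic_continuation_open[of "G0 ` ball 0 1" "ball 0 1" H1 "\<lambda>z. z"])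
    show "G0 ` ball 0 1 \<noteq> {}" by simp
    show "(\<lambda>z. z) holomorphic_on ball 0 1" by (rule holomorphic_on_ident)
    show "H1 z = z" if "z \<in> G0 ` ball 0 1" for z using that H1G by auto
  qed (use G0B w H1hol in auto)
  define \<F>' where "\<F>' j = F ^^ (m (r1 j) - 1)" for j
  obtain P r2 where Phol: "P holomorphic_on ball 0 1" and r2: "strict_mono (r2 :: nat \<Rightarrow> nat)"
    and Ppt: "\<And>x. x \<in> ball 0 1 \<Longrightarrow> (\<lambda>k. \<F>' (r2 k) x) \<longlonglongrightarrow> P x"
  proof (rule Montel[of "ball 0 1" \<H> \<F>'])
    show "\<exists>B. \<forall>h\<in>\<H>. \<forall>z\<in>K. norm (h z) \<le> B" if "compact K" "K \<subseteq> ball 0 1" for K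
      using that by (intro exI[of _ 1]) (auto simp: \<H>_def)
    show "range \<F>' \<subseteq> \<H>" using itH by (auto simp: \<F>'_def)
  qed (auto simp: \<H>_def)
  have mS: "m (r1 (r2 j)) = Suc (m (r1 (r2 j)) - 1)" for j using m1 by (metis Suc_diff_1 less_le_trans zero_less_one)
  have seq2: "(\<lambda>j. \<F> (r1 (r2 j)) w) \<longlonglongrightarrow> w" if w: "w \<in> ball 0 1" for w
    using LIMSEQ_subseq_LIMSEQ[OF H1pt[OF w] r2] H1id[OF w] by (simp add: o_def)
  have PF: "P (F w) = w" if w: "w \<in> ball 0 1" for w
  proof -
    have Fw: "F w \<in> ball 0 1" using FB w by simp
    have "\<F>' (r2 j) (F w) = \<F> (r1 (r2 j)) w" for j
    proof -
      have "\<F> (r1 (r2 j)) w = (F ^^ Suc (m (r1 (r2 j)) - 1)) w" unfolding \<F>_def by (subst mS) simp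
      also have "\<dots> = \<F>' (r2 j) (F w)" unfolding funpow_Suc_right \<F>'_def by simp
      finally show ?thesis by simp
    qed
    then have "(\<lambda>j. \<F>' (r2 j) (F w)) \<longlonglongrightarrow> w" using seq2[OF w] by simp
    with Ppt[OF Fw] show ?thesis using LIMSEQ_unique by blast
  qed
  have Ple: "norm (P w) \<le> 1" if w: "w \<in> ball 0 1" for w
  proof (rule tendsto_upperbound[OF tendsto_norm[OF Ppt[OF w]]])
    show "\<forall>\<^sub>F k in sequentially. norm (\<F>' (r2 k) w) \<le> 1"
      using it(2) w by (intro always_eventually allI) (simp add: less_imp_le \<F>'_def)
  qed simp
  have Pnc: "\<exists>p\<in>ball 0 1. \<exists>q\<in>ball 0 1. P p \<noteq> P q"
  proof -
    have "P (F 0) \<noteq> P (F (1/2))" using PF[of 0] PF[of "1/2"] by auto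
    moreover have "F 0 \<in> ball 0 1" "F (1/2) \<in> ball 0 1" using FB by auto
    ultimately show ?thesis by blast
  qed
  note PB = nonconst_in_ball[OF Phol Pnc Ple]
  have PBw: "norm (P w) < 1" if "norm w < 1" for w
    using PB(1) that by (meson image_subset_iff mem_ball_0)
  have FP: "F (P w) = w" if w: "w \<in> ball 0 1" for w
  proof -
    have Pw: "P w \<in> ball 0 1" using PB(1) w by (meson image_subset_iff)
    have "isCont F (P w)"
      using holomorphic_on_imp_continuous_on[OF holF] Pw
      by (simp add: continuous_on_eq_continuous_at)
    from isCont_tendsto_compose[OF this Ppt[OF w]]
    have "(\<lambda>j. F (\<F>' (r2 j) w)) \<longlonglongrightarrow> F (P w)" .
    moreover have "F (\<F>' (r2 j) w) = \<F> (r1 (r2 j)) w" for j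
    proof -
      have "\<F> (r1 (r2 j)) w = (F ^^ Suc (m (r1 (r2 j)) - 1)) w" unfolding \<F>_def by (subst mS) simp
      then show ?thesis by (simp add: \<F>'_def)
    qed
    ultimately have "(\<lambda>j. \<F> (r1 (r2 j)) w) \<longlonglongrightarrow> F (P w)" by simp
    with seq2[OF w] show ?thesis using LIMSEQ_unique by blast
  qed
  define b where "b = P 0"
  have b: "norm b < 1" using PBw[of 0] by (simp add: b_def)
  have Fb: "F b = 0" using FP[of 0] by (simp add: b_def)
  define M where "M = Moebius_function 0 b"
  define M' where "M' = Moebius_function 0 (- b)"
  have Mhol: "M holomorphic_on ball 0 1" "M' holomorphic_on ball 0 1"
    using Moebius_function_holomorphic b by (auto simp: M_def M'_def)
  have Mmap: "norm (M z) < 1" "norm (M' z) < 1" if "norm z < 1" for z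
    using Moebius_function_norm_lt_1 b that by (auto simp: M_def M'_def)
  have MM': "M (M' z) = z" "M' (M z) = z" if "norm z < 1" for z
    using Moebius_function_compose b that by (auto simp: M_def M'_def)
  define H where "H = (\<lambda>z. F (M' z))"
  define K where "K = (\<lambda>z. M (P z))"
  have Hhol: "H holomorphic_on ball 0 1"
  proof -
    have "M' ` ball 0 1 \<subseteq> ball 0 1" using Mmap by auto
    from holomorphic_on_compose_gen[OF Mhol(2) holF this] show ?thesis by (simp add: H_def o_def)
  qed
  have Khol: "K holomorphic_on ball 0 1"
  proof -
    from holomorphic_on_compose_gen[OF Phol Mhol(1) PB(1)] show ?thesis by (simp add: K_def o_def)
  qed
  have H0: "H 0 = 0" using Fb by (simp add: H_def M'_def Moebius_function_of_zero)
  have K0: "K 0 = 0" by (simp add: K_def M_def b_def[symmetric] Moebius_function_eq_zero)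
  have Hmap: "norm (H z) < 1" if "norm z < 1" for z using FB Mmap that by (simp add: H_def)
  have Kmap: "norm (K z) < 1" if "norm z < 1" for z using PBw Mmap that by (simp add: K_def)
  have KH: "K (H z) = z" if z: "norm z < 1" for z
    using PF[of "M' z"] Mmap[OF z] MM'[OF z] by (simp add: K_def H_def)
  have z0: "norm (1/2 :: complex) < 1" by simp
  have "norm (H (1/2)) = norm (1/2 :: complex)"
  proof (rule antisym)
    show "norm (H (1/2)) \<le> norm (1/2 :: complex)" by (rule Schwarz_Lemma(1)[OF Hhol H0 Hmap z0])
    have "norm (K (H (1/2))) \<le> norm (H (1/2))" by (rule Schwarz_Lemma(1)[OF Khol K0 Kmap Hmap[OF z0]])
    then show "norm (1/2 :: complex) \<le> norm (H (1/2))" using KH[OF z0] by simp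
  qed
  then obtain \<alpha> where \<alpha>: "\<And>z. norm z < 1 \<Longrightarrow> H z = \<alpha> * z" "norm \<alpha> = 1"
    using Schwarz_Lemma(3)[OF Hhol H0 Hmap z0] z0 by (metis one_neq_zero zero_neq_numeral divide_eq_0_iff)
  show ?thesis
  proof (intro exI conjI allI impI)
    show "norm b < 1" by (rule b)
    show "norm (- \<alpha>) = 1" using \<alpha>(2) by simp
    fix w :: complex assume w: "norm w < 1"
    have "F w = H (M w)" using MM'(2)[OF w] by (simp add: H_def)
    also have "\<dots> = \<alpha> * M w" by (rule \<alpha>(1)[OF Mmap(1)[OF w]])
    also have "\<dots> = (b - w) * (- \<alpha>) / (1 - w * cnj b)"
      by (simp add: M_def Moebius_function_simple algebra_simps)
    finally show "F w = (b - w) * (- \<alpha>) / (1 - w * cnj b)" .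
  qed
qed


lemma norm_qpow: "norm (qpow q n) = norm q ^ n"
  by (induction n) (simp_all add: qmult_norm)

lemma ps_abs:
  assumes h: "has_ps a f" and q: "norm q < 1"
  shows "summable (\<lambda>n. norm q ^ n * norm (a n))"
proof -
  define r where "r = (norm q + 1) / 2"
  have p1: "0 < norm q + 1" by (metis add_pos_nonneg norm_ge_zero zero_less_one add.commute)
  have r: "norm q < r" "r < 1" "0 < r" using q p1 unfolding r_def by auto
  have "r *\<^sub>R qone \<in> BB" using r by (simp add: BB_def)
  then have "(\<lambda>n. qpow (r *\<^sub>R qone) n \<otimes> a n) sums f (r *\<^sub>R qone)"
    using h by (simp add: has_ps_def)
  then have "(\<lambda>n. r^n *\<^sub>R a n) sums f (r *\<^sub>R qone)"
    by (simp add: qpow_real qmult_scaleR_left)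
  then have "(\<lambda>n. r^n *\<^sub>R a n) \<longlonglongrightarrow> 0" by (rule summable_LIMSEQ_zero[OF sums_summable])
  then have "Bseq (\<lambda>n. r^n *\<^sub>R a n)" using convergent_imp_Bseq convergentI by blast
  then obtain M where M: "M > 0" "\<forall>n. norm (r^n *\<^sub>R a n) \<le> M" by (rule BseqE)
  have g: "summable (\<lambda>n. M * (norm q / r) ^ n)"
    using r by (intro summable_mult summable_geometric) simp
  show ?thesis
  proof (rule summable_comparison_test[OF _ g], intro exI allI impI)
    fix n :: nat
    have "norm (r^n *\<^sub>R a n) = r^n * norm (a n)" using r by simp
    moreover have "(norm q / r)^n * r^n = norm q ^ n" using r by (simp add: power_divide)
    ultimately have "norm q ^ n * norm (a n) = (norm q / r)^n * norm (r^n *\<^sub>R a n)"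
      by (metis mult.assoc)
    also have "\<dots> \<le> (norm q / r)^n * M" using M(2) r by (intro mult_left_mono) simp_all
    finally show "norm (norm q ^ n * norm (a n)) \<le> M * (norm q / r) ^ n" by (simp add: mult.commute)
  qed
qed

lemma conv_summable:
  assumes ha: "has_ps a f" and hb: "has_ps b g" and q: "q \<in> BB"
  shows "summable (\<lambda>n. qpow q n \<otimes> (\<Sum>k\<le>n. a k \<otimes> b (n - k)))"
proof -
  have q1: "norm q < 1" using q by (simp add: BB_def)
  define A where "A k = norm q ^ k * norm (a k)" for k
  define B where "B k = norm q ^ k * norm (b k)" for k
  have sA: "summable (\<lambda>k. norm (A k))" using ps_abs[OF ha q1] by (simp add: A_def)
  have sB: "summable (\<lambda>k. norm (B k))" using ps_abs[OF hb q1] by (simp add: B_def)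
  have sC: "summable (\<lambda>n. \<Sum>k\<le>n. A k * B (n - k))" by (rule summable_Cauchy_product[OF sA sB])
  show ?thesis
  proof (rule summable_comparison_test[OF _ sC], intro exI allI impI)
    fix n :: nat
    have "norm (qpow q n \<otimes> (\<Sum>k\<le>n. a k \<otimes> b (n - k))) = norm q ^ n * norm (\<Sum>k\<le>n. a k \<otimes> b (n - k))"
      by (simp add: qmult_norm norm_qpow)
    also have "\<dots> \<le> norm q ^ n * (\<Sum>k\<le>n. norm (a k) * norm (b (n - k)))"
      by (intro mult_left_mono order_trans[OF norm_sum]) (simp_all add: qmult_norm)
    also have "\<dots> = (\<Sum>k\<le>n. A k * B (n - k))"
      unfolding sum_distrib_left
    proof (rule sum.cong[OF refl])
      fix k assume "k \<in> {..n}"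
      then have "norm q ^ n = norm q ^ k * norm q ^ (n - k)" by (simp add: power_add[symmetric])
      then show "norm q ^ n * (norm (a k) * norm (b (n - k))) = A k * B (n - k)"
        by (simp add: A_def B_def)
    qed
    finally show "norm (qpow q n \<otimes> (\<Sum>k\<le>n. a k \<otimes> b (n - k))) \<le> (\<Sum>k\<le>n. A k * B (n - k))" .
  qed
qed

lemma conv_cancel:
  fixes d c e :: "nat \<Rightarrow> quat" and n :: nat
  assumes d0: "d 0 = qone"
    and eq: "\<And>n. (\<Sum>k\<le>n. d k \<otimes> c (n - k)) = (\<Sum>k\<le>n. d k \<otimes> e (n - k))"
  shows "c n = e n"
proof (induction n rule: less_induct)
  case (less n)
  show ?case
  proof (cases n)
    case 0
    then show ?thesis using eq[of 0] d0 by simp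
  next
    case (Suc m)
    have "(\<Sum>i\<le>m. d (Suc i) \<otimes> c (m - i)) = (\<Sum>i\<le>m. d (Suc i) \<otimes> e (m - i))"
      using less Suc by (intro sum.cong) auto
    moreover have "(\<Sum>k\<le>Suc m. d k \<otimes> c (Suc m - k)) = (\<Sum>k\<le>Suc m. d k \<otimes> e (Suc m - k))"
      by (rule eq)
    ultimately have "d 0 \<otimes> c (Suc m) = d 0 \<otimes> e (Suc m)"
      unfolding sum.atMost_Suc_shift by simp
    then show ?thesis using d0 Suc by simp
  qed
qed

lemma conv_qI:
  assumes I: "I \<in> Sph" and G: "G holomorphic_on ball 0 1" and H: "H holomorphic_on ball 0 1"
  shows "(\<Sum>k\<le>n. qI I (tc G k) \<otimes> qI I (tc H (n - k))) = qI I (tc (\<lambda>w. G w * H w) n)"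
  unfolding tc_mult[OF G H] qI_sum qI_mult[OF I] ..


theorem proposition5p3:
  fixes f :: "quat \<Rightarrow> quat" and I :: quat
  assumes reg: "slice_regular f"
    and maps: "\<forall>q\<in>BB. f q \<in> BB"
    and I: "I \<in> Sph"
    and slice_pres: "f ` BB_slice I \<subseteq> BB_slice I"
    and subseq: "\<exists>\<sigma> g. strict_mono \<sigma>
        \<and> (\<forall>K. compact K \<and> K \<subseteq> BB \<longrightarrow>
               uniform_limit K (\<lambda>k. riter f (Suc (\<sigma> k))) g sequentially)
        \<and> (\<exists>p\<in>BB. \<exists>q\<in>BB. g p \<noteq> g q)"
  shows "\<exists>a u. a \<in> BB \<and> norm u = 1 \<and>
           (\<forall>q\<in>BB. f q = (sinv (\<lambda>q. qone - q \<otimes> qcnj a) \<star> (\<lambda>q. (a - q) \<otimes> u)) q)"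
proof -
  obtain \<sigma> g where \<sigma>: "strict_mono \<sigma>"
    and ulq: "\<And>K. compact K \<Longrightarrow> K \<subseteq> BB \<Longrightarrow> uniform_limit K (\<lambda>k. riter f (Suc (\<sigma> k))) g sequentially"
    and ncq: "\<exists>p\<in>BB. \<exists>q\<in>BB. g p \<noteq> g q"
    using subseq by blast
  obtain a0 where hps: "has_ps a0 f" using reg by (auto simp: slice_regular_def)
  have slice_f: "f (qI I w) \<in> slice I" if "norm w < 1" for w
  proof -
    have "qI I w \<in> BB_slice I" using that by (simp add: BB_slice_def qI_BB[OF I] slice_eq[OF I])
    then show ?thesis using slice_pres by (auto simp: BB_slice_def)
  qed
  text \<open>Step 1: the coefficients lie in the slice.\<close>
  define Pr where "Pr q = q - qI I (qK I q)" for q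
  have blPr: "bounded_linear Pr"
    unfolding Pr_def by (intro bounded_linear_sub bounded_linear_ident bounded_linear_compose[OF bl_qI bl_qK])
  have a0s: "a0 n = qI I (qK I (a0 n))" for n
  proof -
    have "Pr (a0 n) = 0"
    proof (rule quat_ps_unique0[where e="\<lambda>n. Pr (a0 n)"])
      fix x :: real assume x: "\<bar>x\<bar> < 1"
      have xq: "x *\<^sub>R qone = qI I (of_real x)" by (simp add: qI_of_real)
      have "x *\<^sub>R qone \<in> BB" using x by (simp add: BB_def)
      then have "(\<lambda>n. qpow (x *\<^sub>R qone) n \<otimes> a0 n) sums f (x *\<^sub>R qone)" using hps by (simp add: has_ps_def)
      then have "(\<lambda>n. x^n *\<^sub>R a0 n) sums f (x *\<^sub>R qone)" by (simp add: qpow_real qmult_scaleR_left)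
      from bounded_linear.sums[OF blPr this]
      have "(\<lambda>n. Pr (x^n *\<^sub>R a0 n)) sums Pr (f (x *\<^sub>R qone))" .
      moreover have "Pr (f (x *\<^sub>R qone)) = 0"
        using slice_f[of "of_real x"] x xq qI_qK[OF I] by (simp add: Pr_def)
      moreover have "Pr (x^n *\<^sub>R a0 n) = x^n *\<^sub>R Pr (a0 n)" for n
        using linear_scale[OF bounded_linear.linear[OF blPr]] by simp
      ultimately show "(\<lambda>n. x^n *\<^sub>R Pr (a0 n)) sums 0" by simp
    qed
    then show ?thesis by (simp add: Pr_def)
  qed
  define \<alpha> where "\<alpha> n = qK I (a0 n)" for n
  define F where "F w = qK I (f (qI I w))" for w
  have Fsums: "(\<lambda>n. \<alpha> n * w^n) sums F w" if w: "norm w < 1" for w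
  proof -
    have "qI I w \<in> BB" using w by (simp add: qI_BB[OF I])
    then have "(\<lambda>n. qpow (qI I w) n \<otimes> a0 n) sums f (qI I w)" using hps by (simp add: has_ps_def)
    moreover have "qpow (qI I w) n \<otimes> a0 n = qI I (\<alpha> n * w^n)" for n
      by (subst a0s) (simp add: \<alpha>_def qpow_qI[OF I] qI_mult[OF I] mult.commute)
    ultimately have "(\<lambda>n. qI I (\<alpha> n * w^n)) sums f (qI I w)" by simp
    from bounded_linear.sums[OF bl_qK this, of I] show ?thesis by (simp add: qK_qI[OF I] F_def)
  qed
  have holF: "F holomorphic_on ball 0 1"
    by (rule power_series_holomorphic[where a=\<alpha>]) (use Fsums in auto)
  have tcF: "tc F n = \<alpha> n" for n by (rule CU[symmetric]) (rule Fsums)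
  have a0L: "a0 = (\<lambda>n. qI I (tc F n))"
    using a0s by (auto simp: tcF \<alpha>_def)
  have fL: "f q = L I F q" if q: "q \<in> BB" for q
  proof -
    have "(\<lambda>n. qpow q n \<otimes> a0 n) sums f q" using hps q by (simp add: has_ps_def)
    moreover have "(\<lambda>n. qpow q n \<otimes> a0 n) sums L I F q"
      using L_has_ps[OF I holF] q by (simp add: has_ps_def a0L)
    ultimately show ?thesis by (rule sums_unique2)
  qed
  have Fslice: "f (qI I w) = qI I (F w)" if "norm w < 1" for w
    using qI_qK[OF I slice_f[OF that]] by (simp add: F_def)
  have FB: "norm (F w) < 1" if w: "norm w < 1" for w
  proof -
    have "f (qI I w) \<in> BB" using maps w by (simp add: qI_BB[OF I])
    then show ?thesis using Fslice[OF w] by (simp add: qI_BB[OF I])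
  qed
  note it = iter_props[OF holF FB]
  have riterL: "riter f (Suc k) q = L I (F ^^ Suc k) q" if "q \<in> BB" for k q
    using that
  proof (induction k arbitrary: q)
    case 0
    then show ?case using fL by simp
  next
    case (Suc k)
    have "riter f (Suc (Suc k)) q = rcomp f (riter f (Suc k)) q" by simp
    also have "\<dots> = L I (\<lambda>w. F ((F ^^ Suc k) w)) q"
      by (rule rcomp_L[OF I holF it(1) it(2) fL Suc.IH Suc.prems])
    also have "(\<lambda>w. F ((F ^^ Suc k) w)) = F ^^ Suc (Suc k)" by (simp add: fun_eq_iff)
    finally show ?case .
  qed
  have riter_slice: "riter f (Suc k) (qI I w) = qI I ((F ^^ Suc k) w)" if "norm w < 1" for k w
  proof -
    have "riter f (Suc k) (qI I w) = L I (F ^^ Suc k) (qI I w)"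
      by (rule riterL) (simp add: qI_BB[OF I] that)
    also have "\<dots> = qI I ((F ^^ Suc k) w)" by (rule L_slice[OF I it(1) that])
    finally show ?thesis .
  qed
  define G0 where "G0 w = qK I (g (qI I w))" for w
  obtain B where B: "B > 0" "\<And>x. norm (qK I x) \<le> norm x * B"
    using bounded_linear.pos_bounded[OF bl_qK[of I]] by blast
  have ul: "uniform_limit K (\<lambda>k. F ^^ Suc (\<sigma> k)) G0 sequentially"
    if K: "compact K" "K \<subseteq> ball 0 1" for K
  proof (rule uniform_limitI)
    fix e :: real assume e: "e > 0"
    have cK: "compact (qI I ` K)"
      by (rule compact_continuous_image[OF linear_continuous_on[OF bl_qI] K(1)])
    have sK: "qI I ` K \<subseteq> BB" using K(2) by (auto simp: qI_BB[OF I])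
    have "\<forall>\<^sub>F k in sequentially. \<forall>x\<in>qI I ` K. dist (riter f (Suc (\<sigma> k)) x) (g x) < e / B"
      using uniform_limitD[OF ulq[OF cK sK]] e B by simp
    then show "\<forall>\<^sub>F k in sequentially. \<forall>w\<in>K. dist ((F ^^ Suc (\<sigma> k)) w) (G0 w) < e"
    proof eventually_elim
      case (elim k)
      show ?case
      proof
        fix w assume w: "w \<in> K"
        then have w1: "norm w < 1" using K(2) by auto
        have eqr: "qI I ((F ^^ Suc (\<sigma> k)) w) = riter f (Suc (\<sigma> k)) (qI I w)"
          by (rule riter_slice[OF w1, symmetric])
        have "(F ^^ Suc (\<sigma> k)) w - G0 w = qK I (qI I ((F ^^ Suc (\<sigma> k)) w)) - qK I (g (qI I w))"
          by (simp only: qK_qI[OF I] G0_def)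
        also have "\<dots> = qK I (riter f (Suc (\<sigma> k)) (qI I w) - g (qI I w))"
          unfolding eqr by (rule linear_diff[OF bounded_linear.linear[OF bl_qK], symmetric])
        finally have "(F ^^ Suc (\<sigma> k)) w - G0 w = qK I (riter f (Suc (\<sigma> k)) (qI I w) - g (qI I w))" .
        then have "dist ((F ^^ Suc (\<sigma> k)) w) (G0 w) \<le> dist (riter f (Suc (\<sigma> k)) (qI I w)) (g (qI I w)) * B"
          using B(2) by (simp add: dist_norm)
        also have "\<dots> < e / B * B" using elim w B(1) by (intro mult_strict_right_mono) auto
        finally show "dist ((F ^^ Suc (\<sigma> k)) w) (G0 w) < e" using B(1) by simp
      qed
    qed
  qed
  have nc: "\<exists>p\<in>ball 0 1. \<exists>q\<in>ball 0 1. G0 p \<noteq> G0 q"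
  proof (rule ccontr)
    assume "\<not> ?thesis"
    then have all: "\<forall>p\<in>ball 0 1. \<forall>q\<in>ball 0 1. G0 p = G0 q" by blast
    have cst: "G0 w = G0 0" if "norm w < 1" for w using all that by (metis mem_ball_0 norm_zero zero_less_one)
    define c where "c = G0 0"
    have ptc: "(\<lambda>k. (F ^^ Suc (\<sigma> k)) w) \<longlonglongrightarrow> c" if w1: "norm w < 1" for w
    proof -
      have "(\<lambda>k. (F ^^ Suc (\<sigma> k)) w) \<longlonglongrightarrow> G0 w"
        by (rule tendsto_uniform_limitI[OF ul[of "{w}"]]) (use w1 in auto)
      then show ?thesis using cst[OF w1] by (simp add: c_def)
    qed
    have "g q = qI I c" if q: "q \<in> BB" for q
    proof -
      obtain J z where Jz: "J \<in> Sph" "q = qI J z" "norm z < 1" using q by (rule BB_decomp[OF I])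
      have z': "norm (cnj z) < 1" using Jz by simp
      have lim1: "(\<lambda>k. riter f (Suc (\<sigma> k)) q) \<longlonglongrightarrow> g q"
        by (rule tendsto_uniform_limitI[OF ulq[of "{q}"]]) (use q in auto)
      have eqk: "riter f (Suc (\<sigma> k)) q = qA J I \<otimes> qI I ((F ^^ Suc (\<sigma> k)) z) + qB J I \<otimes> qI I ((F ^^ Suc (\<sigma> k)) (cnj z))" for k
      proof -
        have "riter f (Suc (\<sigma> k)) q = L I (F ^^ Suc (\<sigma> k)) q" by (rule riterL[OF q])
        also have "\<dots> = L I (F ^^ Suc (\<sigma> k)) (qI J z)" by (simp only: Jz(2))
        also have "\<dots> = qA J I \<otimes> qI I ((F ^^ Suc (\<sigma> k)) z) + qB J I \<otimes> qI I ((F ^^ Suc (\<sigma> k)) (cnj z))"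
          by (rule L_repr[OF I it(1) Jz(1,3)])
        finally show ?thesis .
      qed
      have lim2: "(\<lambda>k. qA J I \<otimes> qI I ((F ^^ Suc (\<sigma> k)) z) + qB J I \<otimes> qI I ((F ^^ Suc (\<sigma> k)) (cnj z)))
           \<longlonglongrightarrow> qA J I \<otimes> qI I c + qB J I \<otimes> qI I c"
        by (intro tendsto_add bounded_linear.tendsto[OF bl_qmult_right] bounded_linear.tendsto[OF bl_qI] ptc Jz(3) z')
      have "(\<lambda>k. riter f (Suc (\<sigma> k)) q) = (\<lambda>k. qA J I \<otimes> qI I ((F ^^ Suc (\<sigma> k)) z) + qB J I \<otimes> qI I ((F ^^ Suc (\<sigma> k)) (cnj z)))"
        by (rule ext) (rule eqk)
      with lim1 have "(\<lambda>k. qA J I \<otimes> qI I ((F ^^ Suc (\<sigma> k)) z) + qB J I \<otimes> qI I ((F ^^ Suc (\<sigma> k)) (cnj z))) \<longlonglongrightarrow> g q"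
        by (simp only:)
      from LIMSEQ_unique[OF this lim2] have "g q = qA J I \<otimes> qI I c + qB J I \<otimes> qI I c" .
      also have "\<dots> = qI I c" by (simp add: qmult_add_left[symmetric] qA_qB_sum)
      finally show ?thesis .
    qed
    then show False using ncq by auto
  qed
  obtain a u where au: "norm a < 1" "norm u = 1" and Fform: "\<And>w. norm w < 1 \<Longrightarrow> F w = (a - w) * u / (1 - w * cnj a)"
    using classical_iter[OF holF FB \<sigma> ul nc] by blast
  define A where "A = qI I a"
  define U where "U = qI I u"
  have AB: "A \<in> BB" using au by (simp add: A_def qI_BB[OF I])
  have U1: "norm U = 1" using au by (simp add: U_def qI_norm[OF I])
  define Dc where "Dc = (\<lambda>w::complex. 1 + w * (- cnj a))"
  define Nc where "Nc = (\<lambda>w::complex. a * u + w * (- u))"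
  define Hc where "Hc = (\<lambda>w::complex. 1 / (1 - w * cnj a))"
  have nz: "1 - w * cnj a \<noteq> 0" if w: "norm w < 1" for w
  proof
    assume "1 - w * cnj a = 0"
    then have "norm (w * cnj a) = 1" by (metis eq_iff_diff_eq_0 norm_one)
    moreover have "norm (w * cnj a) < 1" using w au(1)
      by (simp add: norm_mult) (metis mult_strict_mono' norm_ge_zero mult_1_right less_le_trans order_refl mult_less_cancel_right1)
    ultimately show False by simp
  qed
  have nz': "w * cnj a \<noteq> 1" if "norm w < 1" for w using nz[OF that] by simp
  have holD: "Dc holomorphic_on ball 0 1" unfolding Dc_def by (intro holomorphic_intros)
  have holN: "Nc holomorphic_on ball 0 1" unfolding Nc_def by (intro holomorphic_intros)
  have holH: "Hc holomorphic_on ball 0 1" unfolding Hc_def by (intro holomorphic_intros) (use nz in auto)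
  define D where "D = (\<lambda>q. qone - q \<otimes> qcnj A)"
  define N where "N = (\<lambda>q. (A - q) \<otimes> U)"
  have DL: "D q = L I Dc q" if q: "q \<in> BB" for q
  proof -
    have "L I Dc q = qI I 1 + q \<otimes> qI I (- cnj a)" unfolding Dc_def by (rule L_affine[OF I q])
    also have "\<dots> = D q"
      by (simp add: D_def A_def qI_minus qcnj_qI[OF I] qmult_minus_right)
    finally show ?thesis by simp
  qed
  have NL: "N q = L I Nc q" if q: "q \<in> BB" for q
  proof -
    have "L I Nc q = qI I (a * u) + q \<otimes> qI I (- u)" unfolding Nc_def by (rule L_affine[OF I q])
    also have "\<dots> = N q"
      by (simp add: N_def A_def U_def qI_minus qI_mult[OF I] qmult_minus_right qmult_diff_left)
    finally show ?thesis by simp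
  qed
  have cD: "coeffs D = (\<lambda>n. qI I (tc Dc n))" by (rule coeffs_L[OF I holD DL])
  have cN: "coeffs N = (\<lambda>n. qI I (tc Nc n))" by (rule coeffs_L[OF I holN NL])
  have ch0: "coeffs (L I Hc) = (\<lambda>n. qI I (tc Hc n))" by (rule coeffs_L[OF I holH]) simp
  have DH1: "L I (\<lambda>w. Dc w * Hc w) = L I (\<lambda>w. 1)"
    by (rule L_cong) (simp add: Dc_def Hc_def nz nz')
  have exh: "\<exists>h. slice_regular h \<and> (\<forall>q\<in>BB. (D \<star> h) q = qone)"
  proof (intro exI conjI ballI)
    show "slice_regular (L I Hc)" by (rule slice_regular_L[OF I holH]) simp
    fix q assume q: "q \<in> BB"
    have "D \<star> L I Hc = L I (\<lambda>w. Dc w * Hc w)" by (rule star_L[OF I holD holH cD ch0])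
    then show "(D \<star> L I Hc) q = qone" using L_one[OF I q] DH1 by simp
  qed
  define h where "h = sinv D"
  have hh: "slice_regular h \<and> (\<forall>q\<in>BB. (D \<star> h) q = qone)"
    unfolding h_def sinv_def by (rule someI_ex[OF exh])
  define c where "c = coeffs h"
  have hc: "has_ps c h" unfolding c_def by (rule has_ps_coeffs) (use hh in simp)
  have hD: "has_ps (coeffs D) D"
    unfolding cD by (rule has_ps_cong[OF L_has_ps[OF I holD]]) (simp add: DL)
  define e where "e = (\<lambda>n. qI I (tc Hc n))"
  have conv1: "has_ps (\<lambda>n. \<Sum>k\<le>n. coeffs D k \<otimes> c (n - k)) (\<lambda>q. qone)"
    unfolding has_ps_def
  proof
    fix q assume q: "q \<in> BB"
    have "(\<lambda>n. qpow q n \<otimes> (\<Sum>k\<le>n. coeffs D k \<otimes> c (n - k))) sums ps (\<lambda>n. \<Sum>k\<le>n. coeffs D k \<otimes> c (n - k)) q"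
      unfolding ps_def by (rule summable_sums[OF conv_summable[OF hD hc q]])
    moreover have "ps (\<lambda>n. \<Sum>k\<le>n. coeffs D k \<otimes> c (n - k)) q = (D \<star> h) q"
      by (simp add: sprod_def c_def)
    ultimately show "(\<lambda>n. qpow q n \<otimes> (\<Sum>k\<le>n. coeffs D k \<otimes> c (n - k))) sums qone"
      using hh q by simp
  qed
  have hol1: "(\<lambda>w. Dc w * Hc w) holomorphic_on ball 0 1" using holD holH by (intro holomorphic_intros)
  have conv2: "has_ps (\<lambda>n. \<Sum>k\<le>n. coeffs D k \<otimes> e (n - k)) (\<lambda>q. qone)"
  proof -
    have "(\<lambda>n. \<Sum>k\<le>n. coeffs D k \<otimes> e (n - k)) = (\<lambda>n. qI I (tc (\<lambda>w. Dc w * Hc w) n))"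
      unfolding cD e_def by (rule ext) (rule conv_qI[OF I holD holH])
    moreover have "has_ps (\<lambda>n. qI I (tc (\<lambda>w. Dc w * Hc w) n)) (\<lambda>q. qone)"
      by (rule has_ps_cong[OF L_has_ps[OF I hol1]]) (simp add: DH1 L_one[OF I])
    ultimately show ?thesis by simp
  qed
  have d0: "coeffs D 0 = qone" by (simp add: cD tc_0 Dc_def)
  have eqc: "(\<lambda>n. \<Sum>k\<le>n. coeffs D k \<otimes> c (n - k)) = (\<lambda>n. \<Sum>k\<le>n. coeffs D k \<otimes> e (n - k))"
    by (rule has_ps_unique[OF conv1 conv2])
  have ce: "c n = e n" for n
    by (rule conv_cancel[where d="coeffs D", OF d0]) (use fun_cong[OF eqc] in \<open>simp only:\<close>)
  have ch: "coeffs (sinv D) = e" using ce by (auto simp: h_def c_def)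
  have "sinv D \<star> N = L I (\<lambda>w. Hc w * Nc w)"
    by (rule star_L[OF I holH holN]) (simp_all add: ch e_def cN)
  also have "\<dots> = L I F"
  proof (rule L_cong)
    fix w :: complex assume w: "norm w < 1"
    show "Hc w * Nc w = F w" using nz[OF w] Fform[OF w]
      by (simp add: Hc_def Nc_def field_simps)
  qed
  finally have final: "\<forall>q\<in>BB. f q = (sinv D \<star> N) q" using fL by simp
  show ?thesis
    using AB U1 final unfolding D_def N_def by blast
qed


end
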